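(* Let $p\geq1$. For each $v\in W^{1,p}((0,\infty),\sinh^{N-1}(t))$, \[ |v(t)|\leq p^{\frac1p}\|v\|_{L^p_{\sinh^{N-1}}}^{\frac{p-1}p}\|v'\|_{L^p_{\sinh^{N-1}}}^{\frac1p}\sinh^{\frac{1-N}{p}}(t),\quad\forall t\in(0,\infty). \]
   Context: $W^{1,p}((0,\infty),\sinh^{N-1}(t))$ is the space of functions $v\colon(0,\infty)\to\mathbb R$ with a weak derivative such that $\int_0^\infty(|v|^p+|v'|^p)\sinh^{N-1}(t)\mathrm dt<\infty$; $\|w\|_{L^p_{\sinh^{N-1}}}=\left(\int_0^\infty|w|^p\sinh^{N-1}(t)\mathrm dt\right)^{1/p}$. $v(t)$ refers to the continuous representative. *)

theory Defs
  imports "HOL-Analysis.Analysis"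
begin

definition test_fun :: "(real \<Rightarrow> real) \<Rightarrow> bool" where
  "test_fun \<phi> \<longleftrightarrow>
     (\<forall>k x. ((deriv ^^ k) \<phi>) differentiable (at x)) \<and>
     (\<exists>a b. 0 < a \<and> a \<le> b \<and> (\<forall>t. t \<notin> {a..b} \<longrightarrow> \<phi> t = 0))"

definition loc_int :: "(real \<Rightarrow> real) \<Rightarrow> bool" where
  "loc_int f \<longleftrightarrow> (\<forall>K. compact K \<and> K \<subseteq> {0<..} \<longrightarrow> set_integrable lborel K f)"

definition weak_deriv :: "(real \<Rightarrow> real) \<Rightarrow> (real \<Rightarrow> real) \<Rightarrow> bool" where
  "weak_deriv v w \<longleftrightarrow> loc_int v \<and> loc_int w \<and>
     (\<forall>\<phi>. test_fun \<phi> \<longrightarrow>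
        (LINT t:{0<..}|lborel. v t * deriv \<phi> t) = - (LINT t:{0<..}|lborel. w t * \<phi> t))"

definition Lp_sinh_norm :: "real \<Rightarrow> nat \<Rightarrow> (real \<Rightarrow> real) \<Rightarrow> real" where
  "Lp_sinh_norm p N f = (LINT t:{0<..}|lborel. \<bar>f t\<bar> powr p * sinh t ^ (N - 1)) powr (1 / p)"

definition Lp_sinh :: "real \<Rightarrow> nat \<Rightarrow> (real \<Rightarrow> real) \<Rightarrow> bool" where
  "Lp_sinh p N f \<longleftrightarrow> set_borel_measurable lborel {0<..} f \<and>
     set_integrable lborel {0<..} (\<lambda>t. \<bar>f t\<bar> powr p * sinh t ^ (N - 1))"

definition W1p_sinh :: "real \<Rightarrow> nat \<Rightarrow> (real \<Rightarrow> real) \<Rightarrow> (real \<Rightarrow> real) \<Rightarrow> bool" where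
  "W1p_sinh p N v v' \<longleftrightarrow> Lp_sinh p N v \<and> Lp_sinh p N v' \<and> weak_deriv v v'"

end

theory Submission
  imports Defs "HOL-Real_Asymp.Real_Asymp" "HOL-Computational_Algebra.Polynomial"
begin

definition Qp :: "real poly" where "Qp = [:0, 1, -1:]"
lemma poly_Qp: "poly Qp x = x*(1-x)"  by (simp add: Qp_def algebra_simps)
lemma poly_dQp: "poly (pderiv Qp) x = 1 - 2*x"  by (simp add: Qp_def pderiv_pCons algebra_simps)

primrec Pk :: "nat \<Rightarrow> real poly" where
 "Pk 0 = 1"
| "Pk (Suc k) = pderiv (Pk k) * Qp^2 - smult (2 * real k) (Qp * pderiv Qp * Pk k) + pderiv Qp * Pk k"

definition Dk :: "nat \<Rightarrow> real \<Rightarrow> real" where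
 "Dk k x = (if 0 < x \<and> x < 1 then poly (Pk k) x / (x*(1-x))^(2*k) * exp (-1/(x*(1-x))) else 0)"

lemma alg:
  fixes Q P P' d E :: real
  assumes Q0: "Q \<noteq> 0"
  shows "(P' * Q^(2*k) - P * (real (2*k) * (d * Q^(2*k-1)))) / (Q^(2*k) * Q^(2*k)) * E
     + (E * (d / Q^2)) * (P / Q^(2*k)) = (P' * Q^2 - (2*real k) * (Q*d*P) + d*P) / Q^(2*Suc k) * E"
proof (cases k)
  case 0
  then show ?thesis using Q0 by (simp add: field_simps power2_eq_square)
next
  case (Suc j)
  define R where "R = Q^(2*j+1)"
  have R0: "R \<noteq> 0" using Q0 by (simp add: R_def)
  have e1: "Q^(2*k) = Q*R" "Q^(2*k-1) = R" "Q^(2*Suc k) = Q*Q*Q*R" "Q^2 = Q*Q"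
    by (simp_all add: R_def Suc power2_eq_square)
  show ?thesis unfolding e1 using Q0 R0 by (simp add: field_simps)
qed

lemma Dk_deriv_formula:
  fixes x :: real
  assumes x: "0 < x" "x < 1"
  shows "((\<lambda>y. poly (Pk k) y / (y*(1-y))^(2*k) * exp (-1/(y*(1-y)))) has_real_derivative
     Dk (Suc k) x) (at x)"
proof -
  have q: "x*(1-x) > 0" using x by simp
  define Q where "Q = x*(1-x)"
  define E where "E = exp (-1/(x*(1-x)))"
  have Q0: "Q \<noteq> 0" using q unfolding Q_def by linarith
  have x0: "x \<noteq> 0" using q by (metis less_irrefl mult_zero_left)
  have x1: "x \<noteq> 1" using q by (metis less_irrefl mult_zero_right diff_self)
  have dq: "((\<lambda>y. y*(1-y)) has_real_derivative (1-2*x)) (at x)"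
    by (auto intro!: derivative_eq_intros simp: algebra_simps)
  have d1: "((\<lambda>y. poly (Pk k) y) has_real_derivative poly (pderiv (Pk k)) x) (at x)"
    by (rule poly_DERIV)
  have d2: "((\<lambda>y. (y*(1-y))^(2*k)) has_real_derivative of_nat (2*k) * ((1-2*x) * (x*(1-x))^(2*k - Suc 0))) (at x)"
    by (rule DERIV_power[OF dq])
  have d3: "((\<lambda>y. exp (-1/(y*(1-y)))) has_real_derivative exp (-1/(x*(1-x))) * ((1-2*x)/(x*(1-x))^2)) (at x)"
  proof -
    have "((\<lambda>y. -1/(y*(1-y))) has_real_derivative ((1-2*x)/(x*(1-x))^2)) (at x)"
      using DERIV_divide[OF DERIV_const[of "-1"] dq] Q0 unfolding Q_def
      by (simp add: power2_eq_square)
    from DERIV_chain2[OF DERIV_exp this] show ?thesis by simp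
  qed
  have "((\<lambda>y. poly (Pk k) y / (y*(1-y))^(2*k) * exp (-1/(y*(1-y)))) has_real_derivative
     (poly (pderiv (Pk k)) x * Q^(2*k) - poly (Pk k) x * (real (2*k) * ((1 - 2*x) * Q^(2*k-1)))) / (Q^(2*k) * Q^(2*k)) * E
     + (E * ((1-2*x) / Q^2)) * (poly (Pk k) x / Q^(2*k))) (at x)"
    using DERIV_mult[OF DERIV_divide[OF d1 d2] d3] Q0 unfolding Q_def E_def by simp
  moreover have "(poly (pderiv (Pk k)) x * Q^(2*k) - poly (Pk k) x * (real (2*k) * ((1 - 2*x) * Q^(2*k-1)))) / (Q^(2*k) * Q^(2*k)) * E
     + (E * ((1-2*x) / Q^2)) * (poly (Pk k) x / Q^(2*k)) = poly (Pk (Suc k)) x / Q^(2*Suc k) * E"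
    unfolding Pk.simps poly_diff poly_add poly_mult poly_smult poly_power poly_Qp poly_dQp Q_def[symmetric]
    using alg[OF Q0] by simp
  ultimately show ?thesis using x unfolding Q_def E_def Dk_def by simp
qed

lemma poly_tendsto: "((\<lambda>h. poly P (f h)) \<longlongrightarrow> poly P c) F" if "(f \<longlongrightarrow> c) F" for P :: "real poly"
  using isCont_tendsto_compose[OF DERIV_isCont[OF poly_DERIV] that] .

lemma lim_q0: "((\<lambda>h::real. exp(-1/(h*(1-h)))/(h*(1-h))^m) \<longlongrightarrow> 0)(at_right 0)"
  by real_asymp
lemma lim_q1: "((\<lambda>h::real. exp(-1/((1+h)*(-h)))/((1+h)*(-h))^m) \<longlongrightarrow> 0)(at_left 0)"
  by real_asymp

lemma Dk_deriv0: "(Dk k has_real_derivative 0) (at 0)"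
proof -
  have r: "((\<lambda>h. Dk k h / h) \<longlongrightarrow> 0) (at_right 0)"
  proof -
    have "((\<lambda>h. poly (Pk k) h * (exp(-1/(h*(1-h)))/(h*(1-h))^(2*k+1)) * (1-h)) \<longlongrightarrow> poly (Pk k) 0 * 0 * (1-0)) (at_right 0)"
      by (intro tendsto_intros poly_tendsto lim_q0)
    moreover have "eventually (\<lambda>h. poly (Pk k) h * (exp(-1/(h*(1-h)))/(h*(1-h))^(2*k+1)) * (1-h) = Dk k h / h) (at_right 0)"
      unfolding eventually_at_right_field
      by (rule exI[of _ 1]) (auto simp: Dk_def field_simps)
    ultimately show ?thesis by (simp add: tendsto_cong)
  qed
  have l: "((\<lambda>h. Dk k h / h) \<longlongrightarrow> 0) (at_left 0)"
  proof -
    have ev: "eventually (\<lambda>h. Dk k h / h = 0) (at_left 0)"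
      unfolding eventually_at_left_field
      by (rule exI[of _ "-1"]) (auto simp: Dk_def)
    show ?thesis by (subst tendsto_cong[OF ev]) simp
  qed
  have e: "(\<lambda>h. (Dk k (0 + h) - Dk k 0) / h) = (\<lambda>h. Dk k h / h)" by (simp add: Dk_def)
  show ?thesis unfolding DERIV_def e using filterlim_split_at[OF l r] by simp
qed

lemma aux1: "Q = a*(-y) \<Longrightarrow> a \<noteq> 0 \<Longrightarrow> y \<noteq> 0 \<Longrightarrow> (P::real)*(e/Q^(Suc n))*(-a) = P/Q^n*e/y"
  by (simp add: field_simps)

lemma Dk_deriv1: "(Dk k has_real_derivative 0) (at 1)"
proof -
  have l: "((\<lambda>h. Dk k (1+h) / h) \<longlongrightarrow> 0) (at_left 0)"
  proof -
    have "((\<lambda>h. poly (Pk k) (1+h) * (exp(-1/((1+h)*(-h)))/((1+h)*(-h))^(2*k+1)) * (-(1+h))) \<longlongrightarrow> poly (Pk k) (1+0) * 0 * (-(1+0))) (at_left 0)"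
      by (intro tendsto_intros poly_tendsto lim_q1)
    moreover have "eventually (\<lambda>h. poly (Pk k) (1+h) * (exp(-1/((1+h)*(-h)))/((1+h)*(-h))^(2*k+1)) * (-(1+h)) = Dk k (1+h) / h) (at_left 0)"
      unfolding eventually_at_left_field
    proof (rule exI[of _ "-1"], intro conjI allI impI)
      fix y :: real assume y: "-1 < y" "y < 0"
      then have "(1+y)*(-y) > 0" by (intro mult_pos_pos) auto
      then have nz: "(1+y)*(-y) \<noteq> 0" "y \<noteq> 0" "1 + y \<noteq> 0" by auto
      have "Dk k (1+y) / y = poly (Pk k) (1+y) / ((1+y)*(-y))^(2*k) * exp (-1/((1+y)*(-y))) / y"
        using y by (simp add: Dk_def algebra_simps)
      also have "\<dots> = poly (Pk k) (1+y) * (exp(-1/((1+y)*(-y)))/((1+y)*(-y))^(Suc (2*k))) * (-(1+y))"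
        by (rule aux1[of "(1+y)*(-y)" "1+y" y, OF refl nz(3) nz(2), symmetric])
      finally show "poly (Pk k) (1+y) * (exp(-1/((1+y)*(-y)))/((1+y)*(-y))^(2*k+1)) * (-(1+y)) = Dk k (1+y) / y" by simp
    qed simp
    ultimately show ?thesis by (simp add: tendsto_cong)
  qed
  have r: "((\<lambda>h. Dk k (1+h) / h) \<longlongrightarrow> 0) (at_right 0)"
  proof -
    have ev: "eventually (\<lambda>h. Dk k (1+h) / h = 0) (at_right 0)"
      unfolding eventually_at_right_field
      by (rule exI[of _ "1"]) (auto simp: Dk_def)
    show ?thesis by (subst tendsto_cong[OF ev]) simp
  qed
  have e: "(\<lambda>h. (Dk k (1 + h) - Dk k 1) / h) = (\<lambda>h. Dk k (1+h) / h)" by (simp add: Dk_def)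
  show ?thesis unfolding DERIV_def e using filterlim_split_at[OF l r] by simp
qed

lemma Dk_deriv: "(Dk k has_real_derivative Dk (Suc k) x) (at x)"
proof -
  consider "x < 0" | "x = 0" | "0 < x \<and> x < 1" | "x = 1" | "x > 1" by linarith
  then show ?thesis
  proof cases
    case 1
    show ?thesis
      by (rule has_field_derivative_transform_within_open[where f="\<lambda>_. 0" and S="{..<0}"])
         (use 1 in \<open>auto simp: Dk_def\<close>)
  next
    case 2 then show ?thesis using Dk_deriv0 by (simp add: Dk_def)
  next
    case 3
    show ?thesis
      by (rule has_field_derivative_transform_within_open[OF Dk_deriv_formula, where S="{0<..<1}"])
         (use 3 in \<open>auto simp: Dk_def\<close>)
  next
    case 4 then show ?thesis using Dk_deriv1 by (simp add: Dk_def)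
  next
    case 5
    show ?thesis
      by (rule has_field_derivative_transform_within_open[where f="\<lambda>_. 0" and S="{1<..}"])
         (use 5 in \<open>auto simp: Dk_def\<close>)
  qed
qed


abbreviation "rho \<equiv> Dk 0"

lemma rho_eq: "rho x = (if 0 < x \<and> x < 1 then exp (-1/(x*(1-x))) else 0)"
  by (simp add: Dk_def)

lemma rho_nonneg: "rho x \<ge> 0" by (simp add: rho_eq)
lemma rho_pos: "0 < x \<Longrightarrow> x < 1 \<Longrightarrow> rho x > 0" by (simp add: rho_eq)
lemma rho_zero: "x \<le> 0 \<or> 1 \<le> x \<Longrightarrow> rho x = 0" by (auto simp: rho_eq)

lemma Dk_cont: "continuous_on S (Dk k)"
  using Dk_deriv by (meson DERIV_isCont continuous_at_imp_continuous_on)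

definition S0 :: "real \<Rightarrow> real" where "S0 y = integral {-1..y} rho"

lemma S0_shift: assumes "A \<le> -1" shows "integral {A..u} rho = S0 u"
proof (cases "u \<ge> -1")
  case True
  have "integral {A..u} rho = integral {A..-1} rho + integral {-1..u} rho"
    using Henstock_Kurzweil_Integration.integral_combine[where a=A and c="-1" and b=u and f=rho] True assms
      integrable_continuous_real[OF Dk_cont] by simp
  moreover have "integral {A..-1} rho = 0"
    by (subst integral_cong[where g="\<lambda>_. 0"]) (auto simp: rho_eq)
  ultimately show ?thesis by (simp add: S0_def)
next
  case False
  have "integral {A..u} rho = 0"
    using False by (subst integral_cong[where g="\<lambda>_. 0"]) (auto simp: rho_eq)
  moreover have "S0 u = 0" using False by (simp add: S0_def)
  ultimately show ?thesis by simp
qed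

lemma S0_deriv: "(S0 has_real_derivative rho x) (at x)"
proof -
  define A where "A = -\<bar>x\<bar> - 2"
  define B where "B = \<bar>x\<bar> + 2"
  have AB: "A < x" "x < B" "A \<le> -1" by (auto simp: A_def B_def)
  have "((\<lambda>u. integral {A..u} rho) has_real_derivative rho x) (at x within {A..B})"
    by (rule integral_has_real_derivative[OF Dk_cont]) (use AB in auto)
  then have "((\<lambda>u. integral {A..u} rho) has_real_derivative rho x) (at x)"
    using at_within_Icc_at[OF AB(1,2)] by simp
  then show ?thesis using S0_shift[OF AB(3)] by simp
qed

lemma S0_cont: "continuous_on A S0"
  by (meson DERIV_isCont[OF S0_deriv] continuous_at_imp_continuous_on)

lemma S0_mono: "y1 \<le> y2 \<Longrightarrow> S0 y1 \<le> S0 y2"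
proof (rule DERIV_nonneg_imp_increasing_open[of y1 y2 S0])
  fix x show "\<exists>y. (S0 has_real_derivative y) (at x) \<and> 0 \<le> y"
    using S0_deriv rho_nonneg by blast
qed (simp_all add: S0_cont)

lemma S0_zero: "y \<le> 0 \<Longrightarrow> S0 y = 0"
  unfolding S0_def by (subst integral_cong[where g="\<lambda>_. 0"]) (auto simp: rho_eq)

lemma S0_one: "1 \<le> y \<Longrightarrow> S0 y = S0 1"
proof -
  assume y: "1 \<le> y"
  have "integral {-1..y} rho = integral {-1..1} rho + integral {1..y} rho"
    using Henstock_Kurzweil_Integration.integral_combine[where a="-1" and c=1 and b=y and f=rho] y integrable_continuous_real[OF Dk_cont] by simp
  moreover have "integral {1..y} rho = 0"
    by (subst integral_cong[where g="\<lambda>_. 0"]) (auto simp: rho_eq)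
  ultimately show ?thesis by (simp add: S0_def)
qed

definition I0 :: real where "I0 = S0 1"

lemma I0_pos: "I0 > 0"
proof -
  have "S0 0 < S0 1"
  proof (rule DERIV_pos_imp_increasing_open[of 0 1 S0])
    fix x :: real assume "0 < x" "x < 1"
    then show "\<exists>y. (S0 has_real_derivative y) (at x) \<and> 0 < y"
      by (intro exI[of _ "rho x"] conjI S0_deriv rho_pos)
  qed (simp_all add: S0_cont)
  then show ?thesis by (simp add: I0_def S0_zero)
qed

definition R0 :: "real \<Rightarrow> real" where "R0 y = S0 y / I0"

lemma R0_deriv: "(R0 has_real_derivative rho x / I0) (at x)"
  unfolding R0_def by (intro DERIV_cdivide S0_deriv)

lemma R0_zero: "y \<le> 0 \<Longrightarrow> R0 y = 0" by (simp add: R0_def S0_zero)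
lemma R0_one: "1 \<le> y \<Longrightarrow> R0 y = 1"
proof -
  assume "1 \<le> y"
  then have "S0 y = I0" unfolding I0_def by (rule S0_one)
  then show ?thesis using I0_pos by (simp add: R0_def)
qed
lemma R0_bounds: "0 \<le> R0 y \<and> R0 y \<le> 1"
proof -
  have "0 \<le> S0 y"
  proof (cases "y \<le> 0")
    case True then show ?thesis by (simp add: S0_zero)
  next
    case False then show ?thesis using S0_mono[of 0 y] by (simp add: S0_zero)
  qed
  moreover have "S0 y \<le> S0 1"
  proof (cases "y \<ge> 1")
    case True then show ?thesis using S0_one[of y] by simp
  next
    case False then show ?thesis using S0_mono[of y 1] by simp
  qed
  ultimately show ?thesis using I0_pos unfolding R0_def I0_def by simp
qed

definition dseq :: "(nat \<Rightarrow> real \<Rightarrow> real) \<Rightarrow> bool" where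
  "dseq F \<longleftrightarrow> (\<forall>k x. (F k has_real_derivative F (Suc k) x) (at x))"

lemma dseq_deriv: "dseq F \<Longrightarrow> (deriv ^^ k) (F 0) = F k"
proof (induction k)
  case 0 then show ?case by simp
next
  case (Suc k)
  have "deriv (F k) = F (Suc k)"
    using Suc.prems unfolding dseq_def by (auto intro!: ext DERIV_imp_deriv)
  then show ?case using Suc by simp
qed

lemma dseq_test:
  assumes "dseq F" "0 < a" "a \<le> b" "\<And>t. t \<notin> {a..b} \<Longrightarrow> F 0 t = 0"
  shows "test_fun (F 0)"
  unfolding test_fun_def
proof (intro conjI allI)
  fix k x
  show "(deriv ^^ k) (F 0) differentiable at x"
    using assms(1) unfolding dseq_deriv[OF assms(1)] dseq_def real_differentiable_def by blast
next
  show "\<exists>a b. 0 < a \<and> a \<le> b \<and> (\<forall>t. t \<notin> {a..b} \<longrightarrow> F 0 t = 0)"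
    using assms by blast
qed

definition RS :: "nat \<Rightarrow> real \<Rightarrow> real" where
  "RS k = (case k of 0 \<Rightarrow> R0 | Suc j \<Rightarrow> (\<lambda>x. Dk j x / I0))"

lemma dseq_RS: "dseq RS"
  unfolding dseq_def
proof (intro allI)
  fix k x show "(RS k has_real_derivative RS (Suc k) x) (at x)"
    by (cases k) (auto simp: RS_def R0_deriv intro!: DERIV_cdivide Dk_deriv)
qed

lemma dseq_affine:
  assumes "dseq F" "e \<noteq> 0"
  shows "dseq (\<lambda>k x. (1/e)^k * F k ((x - a)/e))"
  unfolding dseq_def
proof (intro allI)
  fix k x
  have d: "((\<lambda>x. (x - a)/e) has_real_derivative 1/e) (at x)"
    using assms(2) by (auto intro!: derivative_eq_intros)
  have "((\<lambda>x. F k ((x - a)/e)) has_real_derivative F (Suc k) ((x-a)/e) * (1/e)) (at x)"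
    using DERIV_chain2[OF _ d] assms(1) unfolding dseq_def by blast
  from DERIV_cmult[OF this, of "(1/e)^k"]
  show "((\<lambda>x. (1/e)^k * F k ((x - a)/e)) has_real_derivative (1/e)^(Suc k) * F (Suc k) ((x - a)/e)) (at x)"
    by (simp add: algebra_simps)
qed

lemma dseq_diff:
  assumes "dseq F" "dseq G"
  shows "dseq (\<lambda>k x. F k x - G k x)"
  using assms unfolding dseq_def by (auto intro!: DERIV_diff)

definition phi :: "real \<Rightarrow> real \<Rightarrow> real \<Rightarrow> real \<Rightarrow> real" where
  "phi a b e x = R0 ((x - a)/e) - R0 ((x - b)/e)"

definition kern :: "real \<Rightarrow> real \<Rightarrow> real \<Rightarrow> real" where
  "kern a e x = rho ((x - a)/e) / (e * I0)"

lemma phi_props: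
  assumes "0 < a" "0 < e" "a + e \<le> b"
  shows "test_fun (phi a (b - e) e)"
    and "\<And>x. deriv (phi a (b - e) e) x = kern a e x - kern (b - e) e x"
    and "\<And>x. x \<notin> {a..b} \<Longrightarrow> phi a (b - e) e x = 0"
    and "\<And>x. \<bar>phi a (b - e) e x\<bar> \<le> 1"
proof -
  define F where "F = (\<lambda>k x. (1/e)^k * RS k ((x - a)/e) - (1/e)^k * RS k ((x - (b-e))/e))"
  have dF: "dseq F" unfolding F_def
    by (intro dseq_diff dseq_affine dseq_RS) (use assms in auto)
  have F0: "F 0 = phi a (b - e) e" by (auto simp: F_def phi_def RS_def)
  show z: "\<And>x. x \<notin> {a..b} \<Longrightarrow> phi a (b - e) e x = 0"
  proof -
    fix x assume "x \<notin> {a..b}"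
    then consider "x < a" | "x > b" by auto
    then show "phi a (b - e) e x = 0"
    proof cases
      case 1
      then have "(x - a)/e \<le> 0" "(x - (b - e))/e \<le> 0" using assms
        by (simp_all add: divide_nonpos_pos)
      then show ?thesis by (simp add: phi_def R0_zero)
    next
      case 2
      then have "(x - a)/e \<ge> 1" "(x - (b - e))/e \<ge> 1" using assms
        by (simp_all add: le_divide_eq)
      then show ?thesis by (simp add: phi_def R0_one)
    qed
  qed
  have ab: "a \<le> b" using assms by simp
  have "test_fun (F 0)"
    by (rule dseq_test[OF dF assms(1) ab]) (simp add: F0 z)
  then show "test_fun (phi a (b - e) e)" by (simp only: F0)
  have dd: "deriv (F 0) = F 1" using dseq_deriv[OF dF, of 1] by simp
  fix x
  have f1: "F 1 x = kern a e x - kern (b - e) e x"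
    by (simp add: F_def RS_def kern_def)
  have "deriv (phi a (b - e) e) x = F 1 x" using dd F0 by simp
  then show "deriv (phi a (b - e) e) x = kern a e x - kern (b - e) e x"
    using f1 by simp
  show "\<And>x. \<bar>phi a (b - e) e x\<bar> \<le> 1"
  proof -
    fix x
    show "\<bar>phi a (b - e) e x\<bar> \<le> 1"
      using R0_bounds[of "(x - a)/e"] R0_bounds[of "(x - (b - e))/e"] unfolding phi_def by linarith
  qed
qed


lemma supp_int:
  fixes f :: "real \<Rightarrow> real"
  assumes "0 < \<alpha>" "\<And>x. x \<notin> {\<alpha>..\<beta>} \<Longrightarrow> f x = 0"
  shows "(LINT x:{0<..}|lborel. f x) = (LINT x:{\<alpha>..\<beta>}|lborel. f x)"
    and "set_integrable lborel {\<alpha>..\<beta>} f \<Longrightarrow> set_integrable lborel {0<..} f"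
proof -
  have eq: "(\<lambda>x. indicator {0<..} x *\<^sub>R f x) = (\<lambda>x. indicator {\<alpha>..\<beta>} x *\<^sub>R f x)"
  proof
    fix x show "indicator {0<..} x *\<^sub>R f x = indicator {\<alpha>..\<beta>} x *\<^sub>R f x"
      using assms by (cases "x \<in> {\<alpha>..\<beta>}") (auto simp: indicator_def)
  qed
  show "(LINT x:{0<..}|lborel. f x) = (LINT x:{\<alpha>..\<beta>}|lborel. f x)"
    unfolding set_lebesgue_integral_def eq ..
  show "set_integrable lborel {\<alpha>..\<beta>} f \<Longrightarrow> set_integrable lborel {0<..} f"
    unfolding set_integrable_def eq .
qed

lemma kern_nonneg: "0 < e \<Longrightarrow> kern a e x \<ge> 0"
  using rho_nonneg I0_pos by (simp add: kern_def)

lemma kern_zero: assumes "0 < e" "x \<notin> {a..a+e}" shows "kern a e x = 0"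
proof -
  have "(x - a)/e \<le> 0 \<or> 1 \<le> (x - a)/e"
    using assms by (auto simp: divide_nonpos_pos le_divide_eq)
  then show ?thesis by (simp add: kern_def rho_zero)
qed

lemma kern_cont: assumes "0 < e" shows "continuous_on S (kern a e)"
proof -
  have "continuous_on S (\<lambda>x. rho ((x - a)/e))"
    by (rule continuous_on_compose2[OF Dk_cont[of UNIV 0]]) (use assms in \<open>auto intro!: continuous_intros\<close>)
  then show ?thesis unfolding kern_def using assms I0_pos by (intro continuous_intros) auto
qed

lemma kern_int: assumes "0 < e" shows "(LINT x:{a..a+e}|lborel. kern a e x) = 1"
proof -
  have d: "((\<lambda>x. R0 ((x - a)/e)) has_real_derivative kern a e x) (at x)" for x
  proof -
    have d1: "((\<lambda>x. (x - a)/e) has_real_derivative 1/e) (at x)"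
      using assms by (auto intro!: derivative_eq_intros)
    show ?thesis using DERIV_chain2[OF R0_deriv d1] by (simp add: kern_def mult.commute)
  qed
  have "integral\<^sup>L lborel (\<lambda>x. indicator {a..a+e} x *\<^sub>R kern a e x) = R0 ((a + e - a)/e) - R0 ((a - a)/e)"
    by (rule integral_FTC_atLeastAtMost)
       (use assms d kern_cont[OF assms] in \<open>auto simp: has_real_derivative_iff_has_vector_derivative[symmetric] intro: has_field_derivative_at_within\<close>)
  also have "\<dots> = 1" using assms by (simp add: R0_zero R0_one)
  finally show ?thesis unfolding set_lebesgue_integral_def .
qed

lemma avg:
  fixes u :: "real \<Rightarrow> real"
  assumes e: "0 < e" and uc: "continuous_on {a..a+e} u" and ub: "\<And>x. x \<in> {a..a+e} \<Longrightarrow> \<bar>u x - c\<bar> \<le> \<omega>"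
  shows "\<bar>(LINT x:{a..a+e}|lborel. u x * kern a e x) - c\<bar> \<le> \<omega>"
proof -
  have iK: "set_integrable lborel {a..a+e} (kern a e)"
    by (rule borel_integrable_atLeastAtMost'[OF kern_cont[OF e]])
  have iuK: "set_integrable lborel {a..a+e} (\<lambda>x. u x * kern a e x)"
    by (rule borel_integrable_atLeastAtMost') (intro continuous_intros uc kern_cont[OF e])
  have icK: "set_integrable lborel {a..a+e} (\<lambda>x. c * kern a e x)"
    using iK by simp
  have iucK: "set_integrable lborel {a..a+e} (\<lambda>x. (u x - c) * kern a e x)"
    by (rule borel_integrable_atLeastAtMost') (intro continuous_intros uc kern_cont[OF e])
  have iaK: "set_integrable lborel {a..a+e} (\<lambda>x. \<bar>(u x - c) * kern a e x\<bar>)"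
    using set_integrable_abs[OF iucK] .
  have iwK: "set_integrable lborel {a..a+e} (\<lambda>x. \<omega> * kern a e x)"
    using iK by simp
  have "(LINT x:{a..a+e}|lborel. u x * kern a e x) - c
      = (LINT x:{a..a+e}|lborel. u x * kern a e x) - (LINT x:{a..a+e}|lborel. c * kern a e x)"
    using kern_int[OF e] by simp
  also have "\<dots> = (LINT x:{a..a+e}|lborel. (u x - c) * kern a e x)"
    using set_integral_diff(2)[OF iuK icK] by (simp add: algebra_simps)
  finally have eq: "(LINT x:{a..a+e}|lborel. u x * kern a e x) - c = (LINT x:{a..a+e}|lborel. (u x - c) * kern a e x)" .
  have "\<bar>LINT x:{a..a+e}|lborel. (u x - c) * kern a e x\<bar> \<le> (LINT x:{a..a+e}|lborel. \<bar>(u x - c) * kern a e x\<bar>)"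
    using set_integral_norm_bound[OF iucK] by simp
  also have "\<dots> \<le> (LINT x:{a..a+e}|lborel. \<omega> * kern a e x)"
  proof (rule set_integral_mono[OF iaK iwK])
    fix x assume x: "x \<in> {a..a+e}"
    show "\<bar>(u x - c) * kern a e x\<bar> \<le> \<omega> * kern a e x"
      using ub[OF x] kern_nonneg[OF e, of a x] by (simp add: abs_mult mult_right_mono)
  qed
  also have "\<dots> = \<omega>" using kern_int[OF e] by simp
  finally show ?thesis using eq by simp
qed

lemma loc_int_Icc: "loc_int f \<Longrightarrow> 0 < a \<Longrightarrow> set_integrable lborel {a..b} f"
proof -
  assume "loc_int f" "0 < a"
  moreover have "{a..b} \<subseteq> {0<..}" using \<open>0 < a\<close> by auto
  ultimately show ?thesis unfolding loc_int_def using compact_Icc by blast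
qed

lemma set_int_abs_nonneg: "0 \<le> (LINT x:A|lborel. \<bar>f x\<bar>)" for f :: "real \<Rightarrow> real"
  unfolding set_lebesgue_integral_def by (rule Bochner_Integration.integral_nonneg) (simp add: indicator_def)

lemma cont_delta:
  fixes v :: "real \<Rightarrow> real"
  assumes "continuous_on {0<..} v" "0 < a" "0 < \<omega>"
  shows "\<exists>d>0. \<forall>x. \<bar>x - a\<bar> < d \<longrightarrow> \<bar>v x - v a\<bar> \<le> \<omega>"
proof -
  have "isCont v a" using assms continuous_on_eq_continuous_at[of "{0<..}" v] by auto
  then have "v \<midarrow>a\<rightarrow> v a" by (simp add: isCont_def)
  then obtain s where s: "s > 0" "\<forall>x. x \<noteq> a \<and> norm (x - a) < s \<longrightarrow> norm (v x - v a) < \<omega>"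
    using assms(3) unfolding LIM_eq by blast
  show ?thesis
  proof (intro exI[of _ s] conjI allI impI)
    fix x assume "\<bar>x - a\<bar> < s"
    then show "\<bar>v x - v a\<bar> \<le> \<omega>" using s assms(3) by (cases "x = a") force+
  qed (use s in auto)
qed

lemma ftc_bound_eps:
  fixes v v' :: "real \<Rightarrow> real"
  assumes wd: "weak_deriv v v'" and cont: "continuous_on {0<..} v" and ab: "0 < a" "a < b"
    and om: "0 < \<omega>"
  shows "\<bar>v b - v a\<bar> \<le> (LINT x:{a..b}|lborel. \<bar>v' x\<bar>) + 2 * \<omega>"
proof -
  obtain da where da: "da > 0" "\<forall>x. \<bar>x - a\<bar> < da \<longrightarrow> \<bar>v x - v a\<bar> \<le> \<omega>"
    using cont_delta[OF cont ab(1) om] by blast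
  obtain db where db: "db > 0" "\<forall>x. \<bar>x - b\<bar> < db \<longrightarrow> \<bar>v x - v b\<bar> \<le> \<omega>"
    using cont_delta[OF cont _ om, of b] ab by auto
  define e where "e = min (min da db / 2) ((b - a)/2)"
  have ee: "e \<le> (b - a)/2" "e \<le> min da db / 2" unfolding e_def by (rule min.cobounded2, rule min.cobounded1)
  have e0: "0 < e" unfolding e_def using da db ab by simp
  note F = e0 da db ab ee min.cobounded1[of da db] min.cobounded2[of da db]
  have e4: "a + e \<le> b" using ee(1) ab(2) by simp
  have e5: "2 * e \<le> b - a" using ee(1) by simp
  have e2: "e < da" using ee(2) da(1) min.cobounded1[of da db] by simp
  have e3: "e < db" using ee(2) db(1) min.cobounded2[of da db] by simp
  note e = e0 e2 e3 e4 e5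
  define \<phi> where "\<phi> = phi a (b - e) e"
  note pp = phi_props[OF ab(1) e(1) e(4), folded \<phi>_def]
  have b0: "0 < b - e" using e ab by linarith
  have vl: "loc_int v'" using wd unfolding weak_deriv_def by blast
  have weq: "(LINT t:{0<..}|lborel. v t * deriv \<phi> t) = - (LINT t:{0<..}|lborel. v' t * \<phi> t)"
    using wd pp(1) unfolding weak_deriv_def by blast
  define f1 where "f1 = (\<lambda>t. v t * kern a e t)"
  define f2 where "f2 = (\<lambda>t. v t * kern (b - e) e t)"
  have c1: "continuous_on {a..a+e} v" by (rule continuous_on_subset[OF cont]) (use ab in auto)
  have c2: "continuous_on {b-e..b-e+e} v" by (rule continuous_on_subset[OF cont]) (use b0 in auto)
  have z1: "\<And>x. x \<notin> {a..a+e} \<Longrightarrow> f1 x = 0" using kern_zero[OF e(1)] by (simp add: f1_def)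
  have z2: "\<And>x. x \<notin> {b-e..b-e+e} \<Longrightarrow> f2 x = 0" using kern_zero[OF e(1)] by (simp add: f2_def)
  have i1: "set_integrable lborel {a..a+e} f1" unfolding f1_def
    by (rule borel_integrable_atLeastAtMost') (intro continuous_intros c1 kern_cont[OF e(1)])
  have i2: "set_integrable lborel {b-e..b-e+e} f2" unfolding f2_def
    by (rule borel_integrable_atLeastAtMost') (intro continuous_intros c2 kern_cont[OF e(1)])
  have I1: "set_integrable lborel {0<..} f1" "(LINT t:{0<..}|lborel. f1 t) = (LINT t:{a..a+e}|lborel. f1 t)"
    using supp_int[OF ab(1) z1] i1 by auto
  have I2: "set_integrable lborel {0<..} f2" "(LINT t:{0<..}|lborel. f2 t) = (LINT t:{b-e..b-e+e}|lborel. f2 t)"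
    using supp_int[OF b0 z2] i2 by auto
  have "(LINT t:{0<..}|lborel. v t * deriv \<phi> t) = (LINT t:{0<..}|lborel. f1 t - f2 t)"
    unfolding pp(2) f1_def f2_def by (simp add: right_diff_distrib)
  also have "\<dots> = (LINT t:{0<..}|lborel. f1 t) - (LINT t:{0<..}|lborel. f2 t)"
    using set_integral_diff(2)[OF I1(1) I2(1)] .
  finally have L: "(LINT t:{0<..}|lborel. v t * deriv \<phi> t) = (LINT t:{a..a+e}|lborel. f1 t) - (LINT t:{b-e..b-e+e}|lborel. f2 t)"
    using I1(2) I2(2) by simp
  have A1: "\<bar>(LINT t:{a..a+e}|lborel. f1 t) - v a\<bar> \<le> \<omega>"
    unfolding f1_def
  proof (rule avg[OF e(1) c1])
    fix x assume "x \<in> {a..a+e}" then show "\<bar>v x - v a\<bar> \<le> \<omega>" using da e by auto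
  qed
  have A2: "\<bar>(LINT t:{b-e..b-e+e}|lborel. f2 t) - v b\<bar> \<le> \<omega>"
    unfolding f2_def
  proof (rule avg[OF e(1) c2])
    fix x assume "x \<in> {b-e..b-e+e}" then show "\<bar>v x - v b\<bar> \<le> \<omega>" using db e by auto
  qed
  have zphi: "\<And>x. x \<notin> {a..b} \<Longrightarrow> v' x * \<phi> x = 0" using pp(3) by simp
  have iv': "set_integrable lborel {a..b} v'" using loc_int_Icc[OF vl ab(1)] .
  have phimeas: "\<phi> \<in> borel_measurable borel"
  proof -
    have "\<forall>x. \<phi> differentiable (at x)"
      using pp(1) unfolding test_fun_def by (metis funpow_0)
    then have "continuous_on UNIV \<phi>"
      by (meson differentiable_imp_continuous_within continuous_at_imp_continuous_on)
    then show ?thesis by (rule borel_measurable_continuous_onI)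
  qed
  have mv': "(\<lambda>x. indicator {a..b} x *\<^sub>R v' x) \<in> borel_measurable lborel"
    using iv' unfolding set_integrable_def by (rule borel_measurable_integrable)
  have mprod: "set_borel_measurable lborel {a..b} (\<lambda>x. v' x * \<phi> x)"
  proof -
    have "(\<lambda>x. (indicator {a..b} x *\<^sub>R v' x) * \<phi> x) \<in> borel_measurable lborel"
      using mv' phimeas by measurable
    then show ?thesis unfolding set_borel_measurable_def by (simp add: mult.assoc)
  qed
  have ivp: "set_integrable lborel {a..b} (\<lambda>x. v' x * \<phi> x)"
    by (rule set_integrable_bound[OF iv' mprod]) (use pp(4) in \<open>auto simp: abs_mult intro!: mult_left_le\<close>)
  have "\<bar>LINT t:{0<..}|lborel. v' t * \<phi> t\<bar> = \<bar>LINT t:{a..b}|lborel. v' t * \<phi> t\<bar>"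
    using supp_int(1)[OF ab(1) zphi] by simp
  also have "\<dots> \<le> (LINT t:{a..b}|lborel. \<bar>v' t * \<phi> t\<bar>)"
    using set_integral_norm_bound[OF ivp] by simp
  also have "\<dots> \<le> (LINT t:{a..b}|lborel. \<bar>v' t\<bar>)"
    by (rule set_integral_mono[OF set_integrable_abs[OF ivp] set_integrable_abs[OF iv']])
       (use pp(4) in \<open>auto simp: abs_mult intro!: mult_left_le\<close>)
  finally have R: "\<bar>LINT t:{0<..}|lborel. v' t * \<phi> t\<bar> \<le> (LINT t:{a..b}|lborel. \<bar>v' t\<bar>)" .
  show ?thesis using L weq A1 A2 R by linarith
qed

lemma ftc_bound:
  fixes v v' :: "real \<Rightarrow> real"
  assumes wd: "weak_deriv v v'" and cont: "continuous_on {0<..} v" and ab: "0 < a" "a \<le> b"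
  shows "\<bar>v b - v a\<bar> \<le> (LINT x:{a..b}|lborel. \<bar>v' x\<bar>)"
proof (cases "a = b")
  case True
  then show ?thesis using set_int_abs_nonneg[of "{a..b}" v'] by simp
next
  case False
  then have ab': "a < b" using ab by simp
  show ?thesis
  proof (rule field_le_epsilon)
    fix \<epsilon> :: real assume "0 < \<epsilon>"
    then show "\<bar>v b - v a\<bar> \<le> (LINT x:{a..b}|lborel. \<bar>v' x\<bar>) + \<epsilon>"
      using ftc_bound_eps[OF wd cont ab(1) ab', of "\<epsilon>/2"] by simp
  qed
qed


lemma right_mono:
  fixes K :: "real \<Rightarrow> real"
  assumes tT: "t \<le> T"
   and loc: "\<And>s. t \<le> s \<Longrightarrow> s < T \<Longrightarrow> \<exists>\<delta>>0. \<forall>s'. s < s' \<and> s' < s + \<delta> \<and> s' \<le> T \<longrightarrow> K s \<le> K s'"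
   and lsc: "\<And>s c. t < s \<Longrightarrow> s \<le> T \<Longrightarrow> (\<forall>r. t \<le> r \<and> r < s \<longrightarrow> c \<le> K r) \<Longrightarrow> c \<le> K s"
  shows "K t \<le> K T"
proof -
  define S where "S = {s. t \<le> s \<and> s \<le> T \<and> (\<forall>r. t \<le> r \<and> r \<le> s \<longrightarrow> K t \<le> K r)}"
  have tS: "t \<in> S" using tT by (auto simp: S_def)
  then have ne: "S \<noteq> {}" by auto
  have bdd: "bdd_above S" by (rule bdd_aboveI[of _ T]) (auto simp: S_def)
  define \<sigma> where "\<sigma> = Sup S"
  have s1: "t \<le> \<sigma>" unfolding \<sigma>_def by (rule cSup_upper[OF tS bdd])
  have s2: "\<sigma> \<le> T" unfolding \<sigma>_def by (rule cSup_least[OF ne]) (auto simp: S_def)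
  have A: "\<forall>r. t \<le> r \<and> r < \<sigma> \<longrightarrow> K t \<le> K r"
  proof (intro allI impI)
    fix r assume r: "t \<le> r \<and> r < \<sigma>"
    then obtain s where "s \<in> S" "r < s" using less_cSup_iff[OF ne bdd] unfolding \<sigma>_def by auto
    then show "K t \<le> K r" using r by (auto simp: S_def)
  qed
  have B: "K t \<le> K \<sigma>"
  proof (cases "\<sigma> = t")
    case True then show ?thesis by simp
  next
    case False then have "t < \<sigma>" using s1 by simp
    then show ?thesis using lsc[OF _ s2 A] by simp
  qed
  have \<sigma>S: "\<sigma> \<in> S"
    using A B s1 s2 unfolding S_def by (auto simp: le_less)
  have "\<sigma> = T"
  proof (rule ccontr)
    assume "\<sigma> \<noteq> T"
    then have lt: "\<sigma> < T" using s2 by simp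
    obtain \<delta> where d: "\<delta> > 0" "\<forall>s'. \<sigma> < s' \<and> s' < \<sigma> + \<delta> \<and> s' \<le> T \<longrightarrow> K \<sigma> \<le> K s'"
      using loc[OF s1 lt] by blast
    define s1 where "s1 = min (\<sigma> + \<delta>/2) T"
    have s1g: "\<sigma> < s1" "s1 \<le> T" "s1 < \<sigma> + \<delta>" using d lt by (auto simp: s1_def)
    have "s1 \<in> S"
      unfolding S_def
    proof (intro CollectI conjI allI impI)
      show "t \<le> s1" using s1 s1g by simp
      show "s1 \<le> T" using s1g by simp
      fix r assume r: "t \<le> r \<and> r \<le> s1"
      show "K t \<le> K r"
      proof (cases "r \<le> \<sigma>")
        case True then show ?thesis using \<sigma>S r unfolding S_def by auto
      next
        case False
        then have "K \<sigma> \<le> K r" using d(2) r s1g by auto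
        then show ?thesis using B by simp
      qed
    qed
    then have "s1 \<le> \<sigma>" unfolding \<sigma>_def by (rule cSup_upper[OF _ bdd])
    then show False using s1g by simp
  qed
  then show ?thesis using B by simp
qed

lemma lint_combine:
  fixes g :: "real \<Rightarrow> real"
  assumes "set_integrable lborel {a..c} g" "a \<le> b" "b \<le> c"
  shows "(LINT x:{a..c}|lborel. g x) = (LINT x:{a..b}|lborel. g x) + (LINT x:{b..c}|lborel. g x)"
proof -
  have i1: "set_integrable lborel {a..b} g"
    by (rule set_integrable_subset[OF assms(1)]) (use assms in auto)
  have i2: "set_integrable lborel {b..c} g"
    by (rule set_integrable_subset[OF assms(1)]) (use assms in auto)
  show ?thesis
    using set_borel_integral_eq_integral[OF assms(1)] set_borel_integral_eq_integral[OF i1]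
      set_borel_integral_eq_integral[OF i2]
      Henstock_Kurzweil_Integration.integral_combine[where a=a and c=b and b=c and f=g] assms
    by simp
qed

lemma int_cont_mult:
  fixes f c :: "real \<Rightarrow> real"
  assumes f: "set_integrable lborel {a..b} f" and c: "continuous_on {a..b} c"
  shows "set_integrable lborel {a..b} (\<lambda>x. c x * f x)"
proof -
  obtain M where M: "\<forall>x\<in>{a..b}. \<bar>c x\<bar> \<le> M"
    using compact_imp_bounded[OF compact_continuous_image[OF c compact_Icc]]
    unfolding bounded_iff by fastforce
  have fM: "set_integrable lborel {a..b} (\<lambda>x. M * f x)" using f by simp
  have mc: "(\<lambda>x. indicator {a..b} x *\<^sub>R c x) \<in> borel_measurable borel"
    by (rule borel_measurable_continuous_on_indicator[OF _ c]) simp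
  have mf: "(\<lambda>x. indicator {a..b} x *\<^sub>R f x) \<in> borel_measurable lborel"
    using f unfolding set_integrable_def by (rule borel_measurable_integrable)
  have "set_borel_measurable lborel {a..b} (\<lambda>x. c x * f x)"
  proof -
    have "(\<lambda>x. (indicator {a..b} x *\<^sub>R c x) * (indicator {a..b} x *\<^sub>R f x)) \<in> borel_measurable lborel"
      using mc mf by measurable
    moreover have "(\<lambda>x. (indicator {a..b} x *\<^sub>R c x) * (indicator {a..b} x *\<^sub>R f x)) = (\<lambda>x. indicator {a..b} x *\<^sub>R (c x * f x))"
      by (auto simp: indicator_def)
    ultimately show ?thesis unfolding set_borel_measurable_def by simp
  qed
  then show ?thesis
  proof (rule set_integrable_bound[OF fM])
    show "AE x in lborel. x \<in> {a..b} \<longrightarrow> norm (c x * f x) \<le> norm (M * f x)"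
    proof (intro AE_I2 impI)
      fix x assume x: "x \<in> {a..b}"
      have "\<bar>c x\<bar> * \<bar>f x\<bar> \<le> M * \<bar>f x\<bar>" using M x by (intro mult_right_mono) auto
      also have "\<dots> \<le> \<bar>M\<bar> * \<bar>f x\<bar>" by (intro mult_right_mono) auto
      finally show "norm (c x * f x) \<le> norm (M * f x)" by (simp add: abs_mult)
    qed
  qed
qed

lemma young_tangent:
  fixes p A B :: real
  assumes p: "p > 1" and A: "A \<ge> 0" and B: "B \<ge> 0"
  shows "A powr p - B powr p \<le> p * A powr (p - 1) * (A - B)"
proof -
  define q where "q = p / (p - 1)"
  have q1: "q > 1" using p by (simp add: q_def)
  have pq: "1/q + 1/p = 1" using p by (simp add: q_def field_simps)
  have "A powr (p - 1) * B \<le> (A powr (p - 1)) powr q / q + B powr p / p"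
    using Youngs_inequality[OF q1 p pq] A B by simp
  also have "(A powr (p - 1)) powr q = A powr p"
    using p by (simp add: powr_powr q_def)
  finally have Y: "A powr (p - 1) * B \<le> A powr p / q + B powr p / p" .
  have AA: "A powr (p - 1) * A = A powr p"
    using powr_add[of A "p - 1" 1] A by simp
  have "p * (A powr (p - 1) * B) \<le> p * (A powr p / q + B powr p / p)"
    using Y p by (intro mult_left_mono) auto
  also have "\<dots> = (p - 1) * A powr p + B powr p"
    using p by (simp add: q_def field_simps)
  finally have "p * (A powr (p - 1) * B) \<le> (p - 1) * A powr p + B powr p" .
  moreover have "p * A powr (p - 1) * (A - B) = p * (A powr (p - 1) * A) - p * (A powr (p - 1) * B)"
    by (simp add: algebra_simps)
  moreover have "(p - 1) * A powr p = p * A powr p - A powr p" by (simp add: algebra_simps)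
  ultimately show ?thesis unfolding AA by linarith
qed

definition hh :: "real \<Rightarrow> real \<Rightarrow> real" where
  "hh p x = (if p = 1 then 1 else \<bar>x\<bar> powr (p - 1))"

lemma hh_nonneg: "hh p x \<ge> 0" by (simp add: hh_def)

lemma conv_ineq:
  assumes p: "p \<ge> 1"
  shows "\<bar>x\<bar> powr p - \<bar>y\<bar> powr p \<le> p * hh p x * \<bar>x - y\<bar>"
proof (cases "p = 1")
  case True then show ?thesis by (simp add: hh_def)
next
  case False
  then have p1: "p > 1" using p by simp
  have "\<bar>x\<bar> powr p - \<bar>y\<bar> powr p \<le> p * \<bar>x\<bar> powr (p - 1) * (\<bar>x\<bar> - \<bar>y\<bar>)"
    by (rule young_tangent[OF p1]) auto
  also have "\<dots> \<le> p * \<bar>x\<bar> powr (p - 1) * \<bar>x - y\<bar>"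
    using p1 by (intro mult_left_mono) auto
  finally show ?thesis using False by (simp add: hh_def)
qed

lemma hh_cont:
  fixes v :: "real \<Rightarrow> real"
  assumes p: "p \<ge> 1" and c: "continuous_on A v"
  shows "continuous_on A (\<lambda>x. hh p (v x))"
proof (cases "p = 1")
  case True then show ?thesis by (simp add: hh_def)
next
  case False
  then have "p > 1" using p by simp
  then have "continuous_on A (\<lambda>x. \<bar>v x\<bar> powr (p - 1))"
    by (intro continuous_on_powr' continuous_intros c) auto
  then show ?thesis using False by (simp add: hh_def)
qed

lemma absp_cont:
  fixes v :: "real \<Rightarrow> real"
  assumes p: "p \<ge> 1" and c: "continuous_on A v"
  shows "continuous_on A (\<lambda>x. \<bar>v x\<bar> powr p)"
  using p by (intro continuous_on_powr' continuous_intros c) auto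


lemma key_eps:
  fixes v v' :: "real \<Rightarrow> real"
  assumes p: "p \<ge> 1" and cont: "continuous_on {0<..} v" and li: "loc_int v'"
   and fb: "\<And>a b. 0 < a \<Longrightarrow> a \<le> b \<Longrightarrow> \<bar>v b - v a\<bar> \<le> (LINT x:{a..b}|lborel. \<bar>v' x\<bar>)"
   and t: "0 < t" "t \<le> T" and om: "0 < \<omega>"
  shows "\<bar>v t\<bar> powr p \<le> \<bar>v T\<bar> powr p + (LINT r:{t..T}|lborel. (p * hh p (v r) + \<omega>) * \<bar>v' r\<bar>)"
proof -
  define g where "g = (\<lambda>r. (p * hh p (v r) + \<omega>) * \<bar>v' r\<bar>)"
  have gint: "set_integrable lborel {a..b} g" if a: "0 < a" for a b
  proof -
    have "continuous_on {a..b} v" by (rule continuous_on_subset[OF cont]) (use a in auto)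
    then have "continuous_on {a..b} (\<lambda>r. p * hh p (v r) + \<omega>)"
      by (intro continuous_intros hh_cont p)
    then show ?thesis unfolding g_def
      by (rule int_cont_mult[OF set_integrable_abs[OF loc_int_Icc[OF li a]]])
  qed
  have vint: "set_integrable lborel {a..b} (\<lambda>r. \<bar>v' r\<bar>)" if a: "0 < a" for a b
    using set_integrable_abs[OF loc_int_Icc[OF li a]] .
  have gnn: "g r \<ge> 0" for r unfolding g_def using p om hh_nonneg[of p "v r"] by simp
  define G where "G = (\<lambda>s. LINT r:{t..s}|lborel. g r)"
  define K where "K = (\<lambda>s. \<bar>v s\<bar> powr p + G s)"
  have Gsplit: "G s' = G s + (LINT r:{s..s'}|lborel. g r)" if "t \<le> s" "s \<le> s'" for s s'
    unfolding G_def by (rule lint_combine[OF gint[OF t(1)] that])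
  have Gmono: "G r \<le> G s" if "t \<le> r" "r \<le> s" for r s
  proof -
    have "0 \<le> (LINT x:{r..s}|lborel. g x)"
      unfolding set_lebesgue_integral_def
      by (rule Bochner_Integration.integral_nonneg) (simp add: indicator_def gnn)
    then show ?thesis using Gsplit[OF that] by simp
  qed
  have hcont: "continuous_on {0<..} (\<lambda>x. hh p (v x))" by (rule hh_cont[OF p cont])
  have "K t \<le> K T"
  proof (rule right_mono[OF t(2)])
    fix s assume s: "t \<le> s" "s < T"
    have s0: "0 < s" using s t by simp
    obtain \<delta> where d: "\<delta> > 0" "\<forall>x. \<bar>x - s\<bar> < \<delta> \<longrightarrow> \<bar>hh p (v x) - hh p (v s)\<bar> \<le> \<omega> / p"
      using cont_delta[OF hcont s0, of "\<omega>/p"] om p by auto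
    show "\<exists>\<delta>>0. \<forall>s'. s < s' \<and> s' < s + \<delta> \<and> s' \<le> T \<longrightarrow> K s \<le> K s'"
    proof (intro exI[of _ \<delta>] conjI allI impI)
      show "\<delta> > 0" by (rule d(1))
      fix s' assume s': "s < s' \<and> s' < s + \<delta> \<and> s' \<le> T"
      have ss: "s \<le> s'" using s' by simp
      have c1: "\<bar>v s\<bar> powr p - \<bar>v s'\<bar> powr p \<le> p * hh p (v s) * \<bar>v s - v s'\<bar>"
        by (rule conv_ineq[OF p])
      have c2: "\<bar>v s - v s'\<bar> \<le> (LINT x:{s..s'}|lborel. \<bar>v' x\<bar>)"
        using fb[OF s0 ss] by (simp add: abs_minus_commute)
      have c3: "p * hh p (v s) * \<bar>v s - v s'\<bar> \<le> p * hh p (v s) * (LINT x:{s..s'}|lborel. \<bar>v' x\<bar>)"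
        using c2 p hh_nonneg[of p "v s"] by (intro mult_left_mono) auto
      have c4: "p * hh p (v s) * (LINT x:{s..s'}|lborel. \<bar>v' x\<bar>) = (LINT x:{s..s'}|lborel. p * hh p (v s) * \<bar>v' x\<bar>)"
        by simp
      have c5: "(LINT x:{s..s'}|lborel. p * hh p (v s) * \<bar>v' x\<bar>) \<le> (LINT x:{s..s'}|lborel. g x)"
      proof (rule set_integral_mono)
        show "set_integrable lborel {s..s'} (\<lambda>x. p * hh p (v s) * \<bar>v' x\<bar>)"
          using vint[OF s0] by simp
        show "set_integrable lborel {s..s'} g" by (rule gint[OF s0])
        fix x assume x: "x \<in> {s..s'}"
        then have "\<bar>x - s\<bar> < \<delta>" using s' by auto
        then have "\<bar>hh p (v x) - hh p (v s)\<bar> \<le> \<omega> / p" using d by blast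
        then have "p * hh p (v s) \<le> p * hh p (v x) + \<omega>"
          using p by (simp add: field_simps abs_le_iff)
        then show "p * hh p (v s) * \<bar>v' x\<bar> \<le> g x"
          unfolding g_def by (intro mult_right_mono) auto
      qed
      show "K s \<le> K s'"
        unfolding K_def using Gsplit[OF s(1) ss] c1 c3 c4 c5 by linarith
    qed
  next
    fix s c assume s: "t < s" "s \<le> T" and H: "\<forall>r. t \<le> r \<and> r < s \<longrightarrow> c \<le> K r"
    have s0: "0 < s" using s t by simp
    have ic: "isCont (\<lambda>x. \<bar>v x\<bar> powr p) s"
      using absp_cont[OF p cont] s0 continuous_on_eq_continuous_at[OF open_greaterThan, of 0 "\<lambda>x. \<bar>v x\<bar> powr p"] by auto
    have lim: "((\<lambda>r. \<bar>v r\<bar> powr p + G s) \<longlongrightarrow> \<bar>v s\<bar> powr p + G s) (at_left s)"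
    proof -
      have l1: "((\<lambda>x. \<bar>v x\<bar> powr p) \<longlongrightarrow> \<bar>v s\<bar> powr p) (at_left s)"
        using ic by (simp add: filterlim_at_split isCont_def)
      show ?thesis by (rule tendsto_add[OF l1 tendsto_const])
    qed
    have ev: "eventually (\<lambda>r. c \<le> \<bar>v r\<bar> powr p + G s) (at_left s)"
      unfolding eventually_at_left_field
    proof (intro exI[of _ t] conjI allI impI)
      show "t < s" by (rule s(1))
      fix r assume r: "t < r" "r < s"
      then have "c \<le> K r" using H by auto
      also have "\<dots> \<le> \<bar>v r\<bar> powr p + G s" unfolding K_def using Gmono[of r s] r by simp
      finally show "c \<le> \<bar>v r\<bar> powr p + G s" .
    qed
    have "c \<le> \<bar>v s\<bar> powr p + G s"
      by (rule tendsto_lowerbound[OF lim ev]) simp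
    then show "c \<le> K s" by (simp add: K_def)
  qed
  moreover have "G t = 0" unfolding G_def set_lebesgue_integral_def
    by (rule integral_eq_zero_AE, rule eventually_mono[OF AE_lborel_singleton[of t]]) (auto simp: indicator_def)
  ultimately show ?thesis unfolding K_def G_def g_def by simp
qed

lemma key:
  fixes v v' :: "real \<Rightarrow> real"
  assumes p: "p \<ge> 1" and cont: "continuous_on {0<..} v" and li: "loc_int v'"
   and fb: "\<And>a b. 0 < a \<Longrightarrow> a \<le> b \<Longrightarrow> \<bar>v b - v a\<bar> \<le> (LINT x:{a..b}|lborel. \<bar>v' x\<bar>)"
   and t: "0 < t" "t \<le> T"
  shows "\<bar>v t\<bar> powr p \<le> \<bar>v T\<bar> powr p + p * (LINT r:{t..T}|lborel. hh p (v r) * \<bar>v' r\<bar>)"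
proof -
  have vint: "set_integrable lborel {t..T} (\<lambda>r. \<bar>v' r\<bar>)"
    using set_integrable_abs[OF loc_int_Icc[OF li t(1)]] .
  have cv: "continuous_on {t..T} v" by (rule continuous_on_subset[OF cont]) (use t in auto)
  have hint: "set_integrable lborel {t..T} (\<lambda>r. hh p (v r) * \<bar>v' r\<bar>)"
    by (rule int_cont_mult[OF vint hh_cont[OF p cv]])
  define L where "L = (LINT r:{t..T}|lborel. \<bar>v' r\<bar>)"
  have L0: "L \<ge> 0" unfolding L_def by (rule set_int_abs_nonneg)
  define H where "H = (LINT r:{t..T}|lborel. hh p (v r) * \<bar>v' r\<bar>)"
  have split: "(LINT r:{t..T}|lborel. (p * hh p (v r) + \<omega>) * \<bar>v' r\<bar>) = p * H + \<omega> * L" for \<omega>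
  proof -
    have "(LINT r:{t..T}|lborel. (p * hh p (v r) + \<omega>) * \<bar>v' r\<bar>)
        = (LINT r:{t..T}|lborel. p * (hh p (v r) * \<bar>v' r\<bar>) + \<omega> * \<bar>v' r\<bar>)"
      by (simp add: algebra_simps)
    also have "\<dots> = (LINT r:{t..T}|lborel. p * (hh p (v r) * \<bar>v' r\<bar>)) + (LINT r:{t..T}|lborel. \<omega> * \<bar>v' r\<bar>)"
      by (rule set_integral_add(2)) (use hint vint in auto)
    also have "\<dots> = p * H + \<omega> * L" by (simp add: H_def L_def)
    finally show ?thesis .
  qed
  show ?thesis
  proof (rule field_le_epsilon)
    fix \<epsilon> :: real assume e: "0 < \<epsilon>"
    define \<omega> where "\<omega> = \<epsilon> / (L + 1)"
    have om: "0 < \<omega>" using e L0 by (simp add: \<omega>_def)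
    have "\<omega> * L \<le> \<epsilon>"
    proof -
      have "\<omega> * L = \<epsilon> * (L / (L + 1))" by (simp add: \<omega>_def)
      also have "\<dots> \<le> \<epsilon> * 1" using e L0 by (intro mult_left_mono) auto
      finally show ?thesis by simp
    qed
    then show "\<bar>v t\<bar> powr p \<le> \<bar>v T\<bar> powr p + p * (LINT r:{t..T}|lborel. hh p (v r) * \<bar>v' r\<bar>) + \<epsilon>"
      using key_eps[OF p cont li fb t om] split[of \<omega>] unfolding H_def by linarith
  qed
qed


lemma sinh_meas[measurable]: "(sinh :: real \<Rightarrow> real) \<in> borel_measurable borel"
  using borel_measurable_continuous_onI[OF continuous_on_sinh[OF continuous_on_id]] by simp

lemma sbm_iff: "set_borel_measurable lborel {0<..} f \<longleftrightarrow> f \<in> borel_measurable (restrict_space lborel {0<..})"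
  for f :: "real \<Rightarrow> real"
  unfolding set_borel_measurable_def by (subst borel_measurable_restrict_space_iff) auto

lemma ident_meas[measurable]: "(\<lambda>x::real. x) \<in> borel_measurable (restrict_space lborel {0<..})"
  by (rule measurable_restrict_space1) simp

lemma meas_test:
  fixes v v' :: "real \<Rightarrow> real"
  assumes [measurable]: "v \<in> borel_measurable (restrict_space lborel {0<..})"
    "v' \<in> borel_measurable (restrict_space lborel {0<..})"
  shows "(\<lambda>x. hh p (v x) * \<bar>v' x\<bar> * sinh x ^ (N - 1)) \<in> borel_measurable (restrict_space lborel {0<..})"
  unfolding hh_def by measurable

lemma subset_le:
  fixes F :: "real \<Rightarrow> real"
  assumes iF: "set_integrable lborel {0<..} F" and nn: "\<And>x. 0 < x \<Longrightarrow> 0 \<le> F x" and a: "0 < \<alpha>"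
  shows "(LINT x:{\<alpha>..\<beta>}|lborel. F x) \<le> (LINT x:{0<..}|lborel. F x)"
proof -
  have i2: "set_integrable lborel {\<alpha>..\<beta>} F"
    by (rule set_integrable_subset[OF iF]) (use a in auto)
  show ?thesis
    unfolding set_lebesgue_integral_def
  proof (rule integral_mono)
    show "integrable lborel (\<lambda>x. indicator {\<alpha>..\<beta>} x *\<^sub>R F x)" using i2 by (simp add: set_integrable_def)
    show "integrable lborel (\<lambda>x. indicator {0<..} x *\<^sub>R F x)" using iF by (simp add: set_integrable_def)
    fix x
    show "indicator {\<alpha>..\<beta>} x *\<^sub>R F x \<le> indicator {0<..} x *\<^sub>R F x"
      using a nn[of x] by (auto simp: indicator_def)
  qed
qed

lemma lower_bound:
  fixes F :: "real \<Rightarrow> real"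
  assumes iF: "set_integrable lborel {0<..} F" and nn: "\<And>x. 0 < x \<Longrightarrow> 0 \<le> F x"
    and a: "0 < \<alpha>" "\<alpha> \<le> \<beta>" and c: "\<And>x. x \<in> {\<alpha>..\<beta>} \<Longrightarrow> c \<le> F x"
  shows "c * (\<beta> - \<alpha>) \<le> (LINT x:{0<..}|lborel. F x)"
proof -
  have i2: "set_integrable lborel {\<alpha>..\<beta>} F"
    by (rule set_integrable_subset[OF iF]) (use a in auto)
  have ic: "set_integrable lborel {\<alpha>..\<beta>} (\<lambda>_. c)"
    by (rule borel_integrable_atLeastAtMost') simp
  have "c * (\<beta> - \<alpha>) = (LINT x:{\<alpha>..\<beta>}|lborel. c)"
    using a by (subst set_integral_const) auto
  also have "\<dots> \<le> (LINT x:{\<alpha>..\<beta>}|lborel. F x)"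
    by (rule set_integral_mono[OF ic i2 c])
  also have "\<dots> \<le> (LINT x:{0<..}|lborel. F x)"
    by (rule subset_le[OF iF nn a(1)])
  finally show ?thesis .
qed

lemma zero_of_int0:
  fixes F :: "real \<Rightarrow> real"
  assumes iF: "set_integrable lborel {0<..} F" and nn: "\<And>x. 0 < x \<Longrightarrow> 0 \<le> F x"
    and cF: "continuous_on {0<..} F" and z: "(LINT x:{0<..}|lborel. F x) = 0" and x0: "0 < x0"
  shows "F x0 = 0"
proof (rule ccontr)
  assume "F x0 \<noteq> 0"
  then have pos: "F x0 > 0" using nn[OF x0] by simp
  obtain d where d: "d > 0" "\<forall>x. \<bar>x - x0\<bar> < d \<longrightarrow> \<bar>F x - F x0\<bar> \<le> F x0 / 2"
    using cont_delta[OF cF x0, of "F x0 / 2"] pos by auto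
  have "F x0 / 2 * ((x0 + d/2) - x0) \<le> (LINT x:{0<..}|lborel. F x)"
  proof (rule lower_bound[OF iF nn x0])
    show "x0 \<le> x0 + d / 2" using d by simp
    fix x assume "x \<in> {x0..x0 + d/2}"
    then have "\<bar>x - x0\<bar> < d" using d by auto
    then have "\<bar>F x - F x0\<bar> \<le> F x0 / 2" using d(2) by blast
    then show "F x0 / 2 \<le> F x" by linarith
  qed
  moreover have "0 < F x0 / 2 * ((x0 + d/2) - x0)" using pos d by simp
  ultimately show False using z by linarith
qed

lemma tail:
  fixes v :: "real \<Rightarrow> real"
  assumes p: "p \<ge> 1"
    and iF: "set_integrable lborel {0<..} (\<lambda>x. \<bar>v x\<bar> powr p * sinh x ^ (N - 1))"
    and e: "0 < \<epsilon>"
  shows "\<exists>T\<ge>t. \<bar>v T\<bar> < \<epsilon>"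
proof (rule ccontr)
  assume "\<not> (\<exists>T\<ge>t. \<bar>v T\<bar> < \<epsilon>)"
  then have H: "\<And>T. T \<ge> t \<Longrightarrow> \<epsilon> \<le> \<bar>v T\<bar>" by force
  define t1 where "t1 = max t 1"
  have t1: "t1 \<ge> t" "t1 \<ge> 1" "0 < t1" by (auto simp: t1_def)
  define c where "c = \<epsilon> powr p * sinh t1 ^ (N - 1)"
  have c0: "c > 0" unfolding c_def using e t1 by simp
  define A where "A = (LINT x:{0<..}|lborel. \<bar>v x\<bar> powr p * sinh x ^ (N - 1))"
  have nn: "\<And>x. 0 < x \<Longrightarrow> 0 \<le> \<bar>v x\<bar> powr p * sinh x ^ (N - 1)" by simp
  have "c * ((t1 + (\<bar>A\<bar>/c + 1)) - t1) \<le> (LINT x:{0<..}|lborel. \<bar>v x\<bar> powr p * sinh x ^ (N - 1))"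
  proof (rule lower_bound[OF iF nn t1(3)])
    show "t1 \<le> t1 + (\<bar>A\<bar> / c + 1)" using c0 by simp
    fix x assume x: "x \<in> {t1..t1 + (\<bar>A\<bar>/c + 1)}"
    then have "x \<ge> t" "x \<ge> t1" using t1 by auto
    then have "\<epsilon> powr p \<le> \<bar>v x\<bar> powr p" using H[of x] e p by (intro powr_mono2) auto
    moreover have "sinh t1 ^ (N - 1) \<le> sinh x ^ (N - 1)"
      using \<open>x \<ge> t1\<close> t1 by (intro power_mono) auto
    ultimately show "c \<le> \<bar>v x\<bar> powr p * sinh x ^ (N - 1)"
      unfolding c_def using t1 by (intro mult_mono) auto
  qed
  then have "c * ((t1 + (\<bar>A\<bar>/c + 1)) - t1) \<le> A" by (simp add: A_def)
  moreover have "c * ((t1 + (\<bar>A\<bar>/c + 1)) - t1) = \<bar>A\<bar> + c" using c0 by (simp add: field_simps)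
  ultimately show False using c0 by linarith
qed

lemma opt:
  fixes A B X p :: real
  assumes p: "p > 1" and A: "A > 0" and B: "B \<ge> 0"
    and H: "\<And>lam. lam > 0 \<Longrightarrow> X \<le> lam powr (p/(p-1)) * A / (p/(p-1)) + B / (lam powr p * p)"
  shows "X \<le> A powr ((p-1)/p) * B powr (1/p)"
proof -
  define q where "q = p/(p-1)"
  have q1: "q > 1" using p by (simp add: q_def)
  have pq: "1/q + 1/p = 1" using p by (simp add: q_def field_simps)
  show ?thesis
  proof (cases "B = 0")
    case True
    have "X \<le> 0"
    proof (rule field_le_epsilon)
      fix \<epsilon> :: real assume e: "0 < \<epsilon>"
      define lam where "lam = (\<epsilon> * q / A) powr (1/q)"
      have l0: "lam > 0" using e q1 A by (simp add: lam_def)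
      have lq: "lam powr q = \<epsilon> * q / A" using e q1 A by (simp add: lam_def powr_powr)
      have "X \<le> lam powr q * A / q" using H[OF l0] True by (simp add: q_def)
      also have "\<dots> = \<epsilon>" using lq A q1 by simp
      finally show "X \<le> 0 + \<epsilon>" by simp
    qed
    then show ?thesis using True by simp
  next
    case False
    then have B0: "B > 0" using B by simp
    define \<alpha> where "\<alpha> = 1/p"
    define \<beta> where "\<beta> = 1/q"
    have ab: "\<alpha> + \<beta> = 1" using pq by (simp add: \<alpha>_def \<beta>_def)
    have b_eq: "\<beta> = (p-1)/p" using p by (simp add: \<beta>_def q_def)
    define lam where "lam = (B/A) powr (1/(p*q))"
    have l0: "lam > 0" using A B0 by (simp add: lam_def)
    have lq: "lam powr q = (B/A) powr \<alpha>" using q1 p by (simp add: lam_def powr_powr \<alpha>_def)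
    have lp: "lam powr p = (B/A) powr \<beta>" using q1 p by (simp add: lam_def powr_powr \<beta>_def)
    define a1 where "a1 = A powr \<alpha>"
    define a2 where "a2 = A powr \<beta>"
    define b1 where "b1 = B powr \<alpha>"
    define b2 where "b2 = B powr \<beta>"
    have pos: "a1 > 0" "a2 > 0" "b1 > 0" "b2 > 0" using A B0 by (simp_all add: a1_def a2_def b1_def b2_def)
    have Aeq: "A = a1 * a2" using A ab by (simp add: a1_def a2_def powr_add[symmetric])
    have Beq: "B = b1 * b2" using B0 ab by (simp add: b1_def b2_def powr_add[symmetric])
    have "X \<le> lam powr q * A / q + B / (lam powr p * p)" using H[OF l0] by (simp add: q_def)
    also have "\<dots> = (b1 / a1) * A / q + B / ((b2 / a2) * p)"
      unfolding lq lp by (simp add: powr_divide a1_def a2_def b1_def b2_def)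
    also have "\<dots> = a2 * b1 * (1/q + 1/p)"
      unfolding Aeq Beq using pos p q1 by (simp add: field_simps)
    also have "\<dots> = A powr ((p-1)/p) * B powr (1/p)"
      using pq by (simp add: a2_def b1_def b_eq \<alpha>_def)
    finally show ?thesis .
  qed
qed


lemma young_pw:
  fixes p lam x y :: real
  assumes p: "p > 1" and l: "lam > 0"
  shows "\<bar>x\<bar> powr (p - 1) * \<bar>y\<bar> \<le> lam powr (p/(p-1)) * \<bar>x\<bar> powr p / (p/(p-1)) + \<bar>y\<bar> powr p / (lam powr p * p)"
proof -
  define q where "q = p/(p-1)"
  have q1: "q > 1" using p by (simp add: q_def)
  have pq: "1/q + 1/p = 1" using p by (simp add: q_def field_simps)
  have a0: "lam * \<bar>x\<bar> powr (p - 1) \<ge> 0" using l by simp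
  have b0: "\<bar>y\<bar> / lam \<ge> 0" using l by simp
  have "(lam * \<bar>x\<bar> powr (p - 1)) * (\<bar>y\<bar> / lam) \<le> (lam * \<bar>x\<bar> powr (p - 1)) powr q / q + (\<bar>y\<bar> / lam) powr p / p"
    by (rule Youngs_inequality[OF q1 p pq a0 b0])
  moreover have "(lam * \<bar>x\<bar> powr (p - 1)) * (\<bar>y\<bar> / lam) = \<bar>x\<bar> powr (p - 1) * \<bar>y\<bar>" using l by simp
  moreover have "(lam * \<bar>x\<bar> powr (p - 1)) powr q = lam powr q * \<bar>x\<bar> powr p"
    using p by (simp add: powr_mult powr_powr q_def)
  moreover have "(\<bar>y\<bar> / lam) powr p = \<bar>y\<bar> powr p / lam powr p" by (simp add: powr_divide)
  ultimately show ?thesis by (simp add: q_def mult.assoc)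
qed

lemma young_int:
  fixes v v' :: "real \<Rightarrow> real"
  assumes p: "p \<ge> 1"
    and mv: "v \<in> borel_measurable (restrict_space lborel {0<..})"
    and mv': "v' \<in> borel_measurable (restrict_space lborel {0<..})"
    and iA: "set_integrable lborel {0<..} (\<lambda>x. \<bar>v x\<bar> powr p * sinh x ^ (N - 1))"
    and iB: "set_integrable lborel {0<..} (\<lambda>x. \<bar>v' x\<bar> powr p * sinh x ^ (N - 1))"
    and A0: "0 < (LINT x:{0<..}|lborel. \<bar>v x\<bar> powr p * sinh x ^ (N - 1))"
  shows "set_integrable lborel {0<..} (\<lambda>x. hh p (v x) * \<bar>v' x\<bar> * sinh x ^ (N - 1))"
    and "(LINT x:{0<..}|lborel. hh p (v x) * \<bar>v' x\<bar> * sinh x ^ (N - 1))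
         \<le> (LINT x:{0<..}|lborel. \<bar>v x\<bar> powr p * sinh x ^ (N - 1)) powr ((p-1)/p)
           * (LINT x:{0<..}|lborel. \<bar>v' x\<bar> powr p * sinh x ^ (N - 1)) powr (1/p)"
proof -
  define A where "A = (LINT x:{0<..}|lborel. \<bar>v x\<bar> powr p * sinh x ^ (N - 1))"
  define B where "B = (LINT x:{0<..}|lborel. \<bar>v' x\<bar> powr p * sinh x ^ (N - 1))"
  have B0: "B \<ge> 0" unfolding B_def set_lebesgue_integral_def
    by (rule Bochner_Integration.integral_nonneg) (simp add: indicator_def)
  have meas: "set_borel_measurable lborel {0<..} (\<lambda>x. hh p (v x) * \<bar>v' x\<bar> * sinh x ^ (N - 1))"
    unfolding sbm_iff by (rule meas_test[OF mv mv'])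
  have "set_integrable lborel {0<..} (\<lambda>x. hh p (v x) * \<bar>v' x\<bar> * sinh x ^ (N - 1)) \<and>
    (LINT x:{0<..}|lborel. hh p (v x) * \<bar>v' x\<bar> * sinh x ^ (N - 1)) \<le> A powr ((p-1)/p) * B powr (1/p)"
  proof (cases "p = 1")
    case True
    have e: "(\<lambda>x. hh p (v x) * \<bar>v' x\<bar> * sinh x ^ (N - 1)) = (\<lambda>x. \<bar>v' x\<bar> powr p * sinh x ^ (N - 1))"
      using True by (simp add: hh_def)
    have XB: "(LINT x:{0<..}|lborel. \<bar>v' x\<bar> powr p * sinh x ^ (N - 1)) = B" by (simp add: B_def)
    have Ap: "A > 0" using A0 by (simp add: A_def)
    show ?thesis unfolding e XB using iB Ap B0 True by simp
  next
    case False
    then have p1: "p > 1" using p by simp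
    have pw: "hh p (v x) * \<bar>v' x\<bar> * sinh x ^ (N - 1) \<le>
        lam powr (p/(p-1)) / (p/(p-1)) * (\<bar>v x\<bar> powr p * sinh x ^ (N - 1)) + 1 / (lam powr p * p) * (\<bar>v' x\<bar> powr p * sinh x ^ (N - 1))"
      if x: "x > 0" and l: "lam > 0" for x lam
    proof -
      have w0: "sinh x ^ (N - 1) \<ge> 0" using x by simp
      have "hh p (v x) * \<bar>v' x\<bar> \<le> lam powr (p/(p-1)) * \<bar>v x\<bar> powr p / (p/(p-1)) + \<bar>v' x\<bar> powr p / (lam powr p * p)"
        using young_pw[OF p1 l, of "v x" "v' x"] False by (simp add: hh_def)
      from mult_right_mono[OF this w0] show ?thesis by (simp add: algebra_simps)
    qed
    have iS: "set_integrable lborel {0<..} (\<lambda>x. c1 * (\<bar>v x\<bar> powr p * sinh x ^ (N - 1)) + c2 * (\<bar>v' x\<bar> powr p * sinh x ^ (N - 1)))" for c1 c2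
      using iA iB by (intro set_integral_add) auto
    have iX: "set_integrable lborel {0<..} (\<lambda>x. hh p (v x) * \<bar>v' x\<bar> * sinh x ^ (N - 1))"
    proof (rule set_integrable_bound[OF iS[of "1 powr (p/(p-1)) / (p/(p-1))" "1 / (1 powr p * p)"] meas])
      show "AE x in lborel. x \<in> {0<..} \<longrightarrow> norm (hh p (v x) * \<bar>v' x\<bar> * sinh x ^ (N - 1)) \<le>
        norm (1 powr (p/(p-1)) / (p/(p-1)) * (\<bar>v x\<bar> powr p * sinh x ^ (N - 1)) + 1 / (1 powr p * p) * (\<bar>v' x\<bar> powr p * sinh x ^ (N - 1)))"
      proof (intro AE_I2 impI)
        fix x :: real assume "x \<in> {0<..}"
        then have x: "x > 0" by simp
        have g0: "hh p (v x) * \<bar>v' x\<bar> * sinh x ^ (N - 1) \<ge> 0" using x hh_nonneg[of p "v x"] by simp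
        have "hh p (v x) * \<bar>v' x\<bar> * sinh x ^ (N - 1) \<le> 1 powr (p/(p-1)) / (p/(p-1)) * (\<bar>v x\<bar> powr p * sinh x ^ (N - 1)) + 1 / (1 powr p * p) * (\<bar>v' x\<bar> powr p * sinh x ^ (N - 1))"
          by (rule pw[OF x]) simp
        then show "norm (hh p (v x) * \<bar>v' x\<bar> * sinh x ^ (N - 1)) \<le>
          norm (1 powr (p/(p-1)) / (p/(p-1)) * (\<bar>v x\<bar> powr p * sinh x ^ (N - 1)) + 1 / (1 powr p * p) * (\<bar>v' x\<bar> powr p * sinh x ^ (N - 1)))"
          using g0 by simp
      qed
    qed
    have H: "(LINT x:{0<..}|lborel. hh p (v x) * \<bar>v' x\<bar> * sinh x ^ (N - 1)) \<le> lam powr (p/(p-1)) * A / (p/(p-1)) + B / (lam powr p * p)"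
      if l: "lam > 0" for lam
    proof -
      have "(LINT x:{0<..}|lborel. hh p (v x) * \<bar>v' x\<bar> * sinh x ^ (N - 1)) \<le>
        (LINT x:{0<..}|lborel. lam powr (p/(p-1)) / (p/(p-1)) * (\<bar>v x\<bar> powr p * sinh x ^ (N - 1)) + 1 / (lam powr p * p) * (\<bar>v' x\<bar> powr p * sinh x ^ (N - 1)))"
        by (rule set_integral_mono[OF iX iS]) (use pw l in auto)
      also have "\<dots> = lam powr (p/(p-1)) / (p/(p-1)) * A + 1 / (lam powr p * p) * B"
        unfolding A_def B_def using iA iB by (subst set_integral_add(2)) auto
      also have "\<dots> = lam powr (p/(p-1)) * A / (p/(p-1)) + B / (lam powr p * p)"
        by simp
      finally show ?thesis .
    qed
    have "(LINT x:{0<..}|lborel. hh p (v x) * \<bar>v' x\<bar> * sinh x ^ (N - 1)) \<le> A powr ((p-1)/p) * B powr (1/p)"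
      by (rule opt[OF p1 _ B0 H]) (use A0 in \<open>simp add: A_def\<close>)
    then show ?thesis using iX by simp
  qed
  then show "set_integrable lborel {0<..} (\<lambda>x. hh p (v x) * \<bar>v' x\<bar> * sinh x ^ (N - 1))"
    and "(LINT x:{0<..}|lborel. hh p (v x) * \<bar>v' x\<bar> * sinh x ^ (N - 1))
         \<le> (LINT x:{0<..}|lborel. \<bar>v x\<bar> powr p * sinh x ^ (N - 1)) powr ((p-1)/p)
           * (LINT x:{0<..}|lborel. \<bar>v' x\<bar> powr p * sinh x ^ (N - 1)) powr (1/p)"
    by (simp_all add: A_def B_def)
qed

lemma final_alg:
  fixes p Vt A B s :: real and N :: nat
  assumes p: "p \<ge> 1" and V: "0 \<le> Vt" and B: "B \<ge> 0" and s: "s > 0" and N: "N \<ge> 1"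
   and H: "Vt powr p \<le> p * (A powr ((p-1)/p) * B powr (1/p)) / s ^ (N - 1)"
  shows "Vt \<le> p powr (1/p) * (A powr (1/p)) powr ((p-1)/p) * (B powr (1/p)) powr (1/p) * s powr ((1 - real N)/p)"
proof -
  have W: "s ^ (N - 1) = s powr (real N - 1)"
    using powr_realpow[OF s, of "N - 1"] N by (simp add: of_nat_diff)
  have inv: "1 / s ^ (N - 1) = s powr (1 - real N)"
    unfolding W using powr_minus_divide[of s "real N - 1"] by simp
  define Q where "Q = p * (A powr ((p-1)/p) * B powr (1/p)) * s powr (1 - real N)"
  have HQ: "Vt powr p \<le> Q" using H inv unfolding Q_def by (simp add: divide_inverse mult.assoc)
  have "Vt = (Vt powr p) powr (1/p)" using p V by (simp add: powr_powr)
  also have "\<dots> \<le> Q powr (1/p)" using HQ p by (intro powr_mono2) auto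
  also have "\<dots> = p powr (1/p) * (A powr ((p-1)/p)) powr (1/p) * (B powr (1/p)) powr (1/p) * (s powr (1 - real N)) powr (1/p)"
    unfolding Q_def by (simp add: powr_mult mult.assoc)
  also have "(A powr ((p-1)/p)) powr (1/p) = (A powr (1/p)) powr ((p-1)/p)"
    by (simp add: powr_powr mult.commute)
  also have "(s powr (1 - real N)) powr (1/p) = s powr ((1 - real N)/p)"
    by (simp add: powr_powr)
  finally show ?thesis .
qed

theorem lemma6p3:
  fixes p :: real and N :: nat and v v' :: "real \<Rightarrow> real"
  assumes "p \<ge> 1" and "N \<ge> 1"
    and "W1p_sinh p N v v'"
    and "continuous_on {0<..} v"
  shows "\<forall>t>0. \<bar>v t\<bar> \<le> p powr (1 / p) * Lp_sinh_norm p N v powr ((p - 1) / p)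
                      * Lp_sinh_norm p N v' powr (1 / p) * sinh t powr ((1 - real N) / p)"
proof (intro allI impI)
  fix t :: real assume t: "t > 0"
  note p = assms(1) and N = assms(2) and cont = assms(4)
  have Lv: "Lp_sinh p N v" and Lv': "Lp_sinh p N v'" and wd: "weak_deriv v v'"
    using assms(3) unfolding W1p_sinh_def by auto
  have mv: "v \<in> borel_measurable (restrict_space lborel {0<..})"
    using Lv unfolding Lp_sinh_def sbm_iff by blast
  have mv': "v' \<in> borel_measurable (restrict_space lborel {0<..})"
    using Lv' unfolding Lp_sinh_def sbm_iff by blast
  have iA: "set_integrable lborel {0<..} (\<lambda>x. \<bar>v x\<bar> powr p * sinh x ^ (N - 1))"
    using Lv unfolding Lp_sinh_def by blast
  have iB: "set_integrable lborel {0<..} (\<lambda>x. \<bar>v' x\<bar> powr p * sinh x ^ (N - 1))"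
    using Lv' unfolding Lp_sinh_def by blast
  define A where "A = (LINT x:{0<..}|lborel. \<bar>v x\<bar> powr p * sinh x ^ (N - 1))"
  define B where "B = (LINT x:{0<..}|lborel. \<bar>v' x\<bar> powr p * sinh x ^ (N - 1))"
  have nv: "Lp_sinh_norm p N v = A powr (1/p)" by (simp add: Lp_sinh_norm_def A_def)
  have nv': "Lp_sinh_norm p N v' = B powr (1/p)" by (simp add: Lp_sinh_norm_def B_def)
  have A0: "A \<ge> 0" unfolding A_def set_lebesgue_integral_def
    by (rule Bochner_Integration.integral_nonneg) (simp add: indicator_def)
  have B0: "B \<ge> 0" unfolding B_def set_lebesgue_integral_def
    by (rule Bochner_Integration.integral_nonneg) (simp add: indicator_def)
  have st: "sinh t > 0" using t by simp
  have Wt: "sinh t ^ (N - 1) > 0" using st by simp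
  show "\<bar>v t\<bar> \<le> p powr (1 / p) * Lp_sinh_norm p N v powr ((p - 1) / p)
                      * Lp_sinh_norm p N v' powr (1 / p) * sinh t powr ((1 - real N) / p)"
  proof (cases "A = 0")
    case True
    have F: "continuous_on {0<..} (\<lambda>x. \<bar>v x\<bar> powr p * sinh x ^ (N - 1))"
      by (intro continuous_intros absp_cont[OF p cont])
    have "\<bar>v t\<bar> powr p * sinh t ^ (N - 1) = 0"
      by (rule zero_of_int0[OF iA _ F _ t]) (use True in \<open>simp_all add: A_def\<close>)
    then have "v t = 0" using Wt t by auto
    then show ?thesis by simp
  next
    case False
    then have Ap: "A > 0" using A0 by simp
    have li: "loc_int v'" using wd unfolding weak_deriv_def by blast
    have fb: "\<And>a b. 0 < a \<Longrightarrow> a \<le> b \<Longrightarrow> \<bar>v b - v a\<bar> \<le> (LINT x:{a..b}|lborel. \<bar>v' x\<bar>)"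
      by (rule ftc_bound[OF wd cont])
    have Api: "0 < (LINT x:{0<..}|lborel. \<bar>v x\<bar> powr p * sinh x ^ (N - 1))" using Ap by (simp add: A_def)
    note Y = young_int[OF p mv mv' iA iB Api]
    define X where "X = (LINT x:{0<..}|lborel. hh p (v x) * \<bar>v' x\<bar> * sinh x ^ (N - 1))"
    have XY: "X \<le> A powr ((p-1)/p) * B powr (1/p)" using Y(2) by (simp add: X_def A_def B_def)
    define Wv where "Wv = sinh t ^ (N - 1)"
    have Wv: "Wv > 0" using Wt by (simp add: Wv_def)
    have bnd: "\<bar>v t\<bar> powr p \<le> \<bar>v T\<bar> powr p + p * (X / Wv)" if T: "t \<le> T" for T
    proof -
      have k: "\<bar>v t\<bar> powr p \<le> \<bar>v T\<bar> powr p + p * (LINT r:{t..T}|lborel. hh p (v r) * \<bar>v' r\<bar>)"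
        by (rule key[OF p cont li fb t T])
      have cv: "continuous_on {t..T} v" by (rule continuous_on_subset[OF cont]) (use t in auto)
      have i1: "set_integrable lborel {t..T} (\<lambda>r. hh p (v r) * \<bar>v' r\<bar>)"
        by (rule int_cont_mult[OF set_integrable_abs[OF loc_int_Icc[OF li t]] hh_cont[OF p cv]])
      have i2: "set_integrable lborel {t..T} (\<lambda>r. hh p (v r) * \<bar>v' r\<bar> * sinh r ^ (N - 1))"
        by (rule set_integrable_subset[OF Y(1)]) (use t in auto)
      have i3: "set_integrable lborel {t..T} (\<lambda>r. hh p (v r) * \<bar>v' r\<bar> * sinh r ^ (N - 1) / Wv)"
        using i2 by simp
      have "(LINT r:{t..T}|lborel. hh p (v r) * \<bar>v' r\<bar>) \<le> (LINT r:{t..T}|lborel. hh p (v r) * \<bar>v' r\<bar> * sinh r ^ (N - 1) / Wv)"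
      proof (rule set_integral_mono[OF i1 i3])
        fix r assume r: "r \<in> {t..T}"
        have g0: "hh p (v r) * \<bar>v' r\<bar> \<ge> 0" using hh_nonneg[of p "v r"] by simp
        have "Wv \<le> sinh r ^ (N - 1)" unfolding Wv_def using r st by (intro power_mono) auto
        then have "hh p (v r) * \<bar>v' r\<bar> * Wv \<le> hh p (v r) * \<bar>v' r\<bar> * sinh r ^ (N - 1)"
          using g0 by (intro mult_left_mono) auto
        then show "hh p (v r) * \<bar>v' r\<bar> \<le> hh p (v r) * \<bar>v' r\<bar> * sinh r ^ (N - 1) / Wv"
          using Wv by (simp add: le_divide_eq)
      qed
      also have "\<dots> = (LINT r:{t..T}|lborel. hh p (v r) * \<bar>v' r\<bar> * sinh r ^ (N - 1)) / Wv"
        by simp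
      also have "\<dots> \<le> X / Wv"
        unfolding X_def
      proof (rule divide_right_mono)
        show "(LINT r:{t..T}|lborel. hh p (v r) * \<bar>v' r\<bar> * sinh r ^ (N - 1)) \<le> (LINT x:{0<..}|lborel. hh p (v x) * \<bar>v' x\<bar> * sinh x ^ (N - 1))"
          by (rule subset_le[OF Y(1) _ t]) (simp add: hh_nonneg)
      qed (use Wv in simp)
      finally have "(LINT r:{t..T}|lborel. hh p (v r) * \<bar>v' r\<bar>) \<le> X / Wv" .
      then show ?thesis using k p by (smt (verit) mult_left_mono)
    qed
    have vt: "\<bar>v t\<bar> powr p \<le> p * (X / Wv)"
    proof (rule field_le_epsilon)
      fix \<delta> :: real assume d: "0 < \<delta>"
      define \<epsilon> where "\<epsilon> = \<delta> powr (1/p)"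
      have e: "0 < \<epsilon>" using d by (simp add: \<epsilon>_def)
      obtain T where T: "T \<ge> t" "\<bar>v T\<bar> < \<epsilon>" using tail[OF p iA e, of t] by blast
      have "\<bar>v T\<bar> powr p \<le> \<epsilon> powr p" using T p by (intro powr_mono2) auto
      also have "\<epsilon> powr p = \<delta>" using d p by (simp add: \<epsilon>_def powr_powr)
      finally show "\<bar>v t\<bar> powr p \<le> p * (X / Wv) + \<delta>" using bnd[OF T(1)] by linarith
    qed
    also have "p * (X / Wv) \<le> p * (A powr ((p-1)/p) * B powr (1/p)) / Wv"
      using XY Wv p by (simp add: divide_right_mono)
    finally have H: "\<bar>v t\<bar> powr p \<le> p * (A powr ((p-1)/p) * B powr (1/p)) / sinh t ^ (N - 1)"
      by (simp add: Wv_def)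
    show ?thesis unfolding nv nv' by (rule final_alg[OF p _ B0 st N H]) simp
  qed
qed


end
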